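(* Let $K>1$ and let $\kappa=(x_i)_{i\in\mathbb Z}$ and $\eta=(y_i)_{i\in\mathbb Z}$ be independent $K$-contracting axes in a geodesic metric space $X$. Then there exists $K'>0$ such that $\operatorname{diam}\big(x_0\cup\pi_\kappa(\eta)\big)<K'$ and $\operatorname{diam}\big(x_0\cup\pi_{\{x_i\}_{i\ge0}}(\{x_i\}_{i\le0})\big)<K'$.
   Context: $X$ is a geodesic metric space. For $A\subseteq X$, $\pi_A(z)=\{a\in A:d(z,a)=d(z,A)\}$ and $\pi_A(B)=\bigcup_{b\in B}\pi_A(b)$. $A$ is $K$-contracting if $\pi_A(z)\ne\emptyset$ for all $z$ and $d(x,y)\le d(x,A)-K$ implies $\operatorname{diam}(\pi_A(x)\cup\pi_A(y))\le K$. A $K$-contracting axis indexed by $\mathbb Z$ is a sequence $(x_i)_{i\in\mathbb Z}$ with $|i-j|/K-K\le d(x_i,x_j)\le K|i-j|+K$ whose image $\{x_i\}$ is $K$-contracting; projections onto it mean onto its image. Sequences $(x_i),(y_i)$ are independent if for every $M>0$ the set $\{(n,m):d(x_n,y_m)<M\}$ is bounded. *)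

theory Defs
  imports "HOL-Analysis.Analysis"
begin

definition geodesic_space :: "'a::metric_space itself \<Rightarrow> bool" where
  "geodesic_space _ \<longleftrightarrow> (\<forall>x y::'a. \<exists>\<gamma>::real \<Rightarrow> 'a.
      \<gamma> 0 = x \<and> \<gamma> (dist x y) = y \<and>
      (\<forall>s\<in>{0..dist x y}. \<forall>t\<in>{0..dist x y}. dist (\<gamma> s) (\<gamma> t) = \<bar>s - t\<bar>))"

text \<open>Diameter with values in the extended reals (unbounded sets have diameter infinity).\<close>
definition diam :: "'a::metric_space set \<Rightarrow> ereal" where
  "diam S = (SUP p\<in>S \<times> S. ereal (dist (fst p) (snd p)))"

definition proj :: "'a::metric_space set \<Rightarrow> 'a \<Rightarrow> 'a set" where
  "proj A z = {a\<in>A. dist z a = infdist z A}"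

definition proj_set :: "'a::metric_space set \<Rightarrow> 'a set \<Rightarrow> 'a set" where
  "proj_set A B = (\<Union>b\<in>B. proj A b)"

definition contracting :: "real \<Rightarrow> 'a::metric_space set \<Rightarrow> bool" where
  "contracting K A \<longleftrightarrow> (\<forall>z. proj A z \<noteq> {}) \<and>
     (\<forall>x y. dist x y \<le> infdist x A - K \<longrightarrow> diam (proj A x \<union> proj A y) \<le> ereal K)"

definition contracting_axis :: "real \<Rightarrow> (int \<Rightarrow> 'a::metric_space) \<Rightarrow> bool" where
  "contracting_axis K x \<longleftrightarrow>
     (\<forall>i j. \<bar>real_of_int (i - j)\<bar> / K - K \<le> dist (x i) (x j) \<and>
            dist (x i) (x j) \<le> K * \<bar>real_of_int (i - j)\<bar> + K) \<and>
     contracting K (range x)"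

definition independent :: "(int \<Rightarrow> 'a::metric_space) \<Rightarrow> (int \<Rightarrow> 'a) \<Rightarrow> bool" where
  "independent x y \<longleftrightarrow> (\<forall>M>0. \<exists>B::int. \<forall>n m. dist (x n) (y m) < M \<longrightarrow> \<bar>n\<bar> \<le> B \<and> \<bar>m\<bar> \<le> B)"

end

theory Submission
  imports Defs
begin

lemma diam_le_dist:
  assumes "diam S \<le> ereal c" "a \<in> S" "b \<in> S"
  shows "dist a b \<le> c"
proof -
  have "ereal (dist a b) \<le> diam S" unfolding diam_def
    using assms(2,3) by (intro SUP_upper2[of "(a,b)"]) auto
  with assms(1) have "ereal (dist a b) \<le> ereal c" by (rule order.trans[rotated])
  thus ?thesis by simp
qed

lemma diam_bound:
  assumes "\<And>a b. a \<in> S \<Longrightarrow> b \<in> S \<Longrightarrow> dist a b \<le> c"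
  shows "diam S \<le> ereal c"
  unfolding diam_def using assms by (intro SUP_least) auto

lemma projD: "p \<in> proj A z \<Longrightarrow> p \<in> A \<and> dist z p = infdist z A"
  unfolding proj_def by auto

lemma proj_ne: "contracting K A \<Longrightarrow> \<exists>p. p \<in> proj A z"
  unfolding contracting_def by auto

lemma contrD:
  assumes "contracting K A" "dist u w \<le> infdist u A - K" "p \<in> proj A u" "q \<in> proj A w"
  shows "dist p q \<le> K"
proof -
  have "diam (proj A u \<union> proj A w) \<le> ereal K" using assms(1,2) unfolding contracting_def by auto
  thus ?thesis using assms(3,4) diam_le_dist by blast
qed

lemma bgi_claim:
  assumes c: "contracting K A" and K: "K > 0"
    and iso: "\<forall>s\<in>{0..l}. \<forall>s'\<in>{0..l}. dist (g s) (g s') = \<bar>s - s'\<bar>"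
    and far: "\<forall>s\<in>{0<..l}. 3*K \<le> infdist (g s) A"
    and q: "q \<in> proj A (g 0)"
  shows "\<forall>t. 0 < t \<and> t \<le> l \<and> t \<le> real n * K \<longrightarrow> (\<forall>p\<in>proj A (g t). \<exists>N::nat.
           dist q p \<le> real N * K + K \<and> (N = 0 \<or> infdist (g t) A + 2*(real N * K) - 3*K \<le> t))"
proof (induction n)
  case 0
  then show ?case using K by auto
next
  case (Suc n)
  show ?case
  proof (intro allI impI ballI)
    fix t p assume t: "0 < t \<and> t \<le> l \<and> t \<le> real (Suc n) * K" and p: "p \<in> proj A (g t)"
    have dt: "dist (g t) (g 0) = t" using iso t by auto
    show "\<exists>N::nat. dist q p \<le> real N * K + K \<and> (N = 0 \<or> infdist (g t) A + 2*(real N * K) - 3*K \<le> t)"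
    proof (cases "t \<le> infdist (g t) A - K")
      case True
      have "dist p q \<le> K" using contrD[OF c _ p q] True dt by auto
      thus ?thesis by (intro exI[of _ 0]) (auto simp: dist_commute)
    next
      case False
      define t' where "t' = t - (infdist (g t) A - K)"
      have rt: "3*K \<le> infdist (g t) A" using far t by auto
      have t'pos: "0 < t'" using False t'_def by auto
      have t'le: "t' \<le> t - 2*K" using rt t'_def by auto
      have t'n: "t' \<le> real n * K" using t'le t K by (auto simp: algebra_simps)
      obtain p' where p': "p' \<in> proj A (g t')" using proj_ne[OF c] by blast
      have "dist (g t) (g t') = t - t'" using iso t t'pos t'le K by auto
      hence "dist p p' \<le> K" using contrD[OF c _ p p'] t'_def by auto
      from Suc.IH[rule_format, of t' p'] t'pos t'le t t'n p' K obtain N' where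
        N': "dist q p' \<le> real N' * K + K"
            "N' = 0 \<or> infdist (g t') A + 2*(real N' * K) - 3*K \<le> t'" by auto
      have r': "3*K \<le> infdist (g t') A" using far t'pos t'le t K by auto
      have A1: "dist q p \<le> real (Suc N') * K + K"
        using N'(1) \<open>dist p p' \<le> K\<close> dist_triangle[of q p p'] by (auto simp: algebra_simps dist_commute)
      have "2 * (real N' * K) \<le> t'" using N'(2) r' t'pos by auto
      hence A2: "infdist (g t) A + 2*(real (Suc N') * K) - 3*K \<le> t"
        using t'_def by (auto simp: algebra_simps)
      show ?thesis using A1 A2 by blast
    qed
  qed
qed

lemma bgi:
  assumes c: "contracting K A" and K: "K > 0" and l: "0 \<le> l"
    and iso: "\<forall>s\<in>{0..l}. \<forall>s'\<in>{0..l}. dist (g s) (g s') = \<bar>s - s'\<bar>"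
    and far: "\<forall>s\<in>{0<..l}. 3*K \<le> infdist (g s) A"
    and q: "q \<in> proj A (g 0)" and p: "p \<in> proj A (g l)"
  shows "dist q p \<le> infdist (g 0) A + 5*K"
proof (cases "l = 0")
  case True
  have p0: "p \<in> proj A (g 0)" using p True by simp
  show ?thesis
  proof (cases "K \<le> infdist (g 0) A")
    case True
    have "dist q p \<le> K" using contrD[OF c _ q p0] True by auto
    thus ?thesis using infdist_nonneg[of "g 0" A] K by auto
  next
    case False
    have "dist q p \<le> dist q (g 0) + dist (g 0) p" by (rule dist_triangle)
    also have "\<dots> = 2 * infdist (g 0) A" using projD[OF q] projD[OF p0] by (auto simp: dist_commute)
    finally show ?thesis using False K by auto
  qed
next
  case False
  hence lpos: "0 < l" using l by auto
  obtain n :: nat where n: "l \<le> real n * K"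
  proof -
    obtain n :: nat where "l / K \<le> real n" using real_arch_simple by blast
    thus ?thesis using that K by (auto simp: field_simps)
  qed
  from bgi_claim[OF c K iso far q, of n, rule_format, of l p] lpos n p obtain N :: nat where
    N: "dist q p \<le> real N * K + K" "N = 0 \<or> infdist (g l) A + 2*(real N * K) - 3*K \<le> l" by auto
  have "l = dist (g 0) (g l)" using iso l by auto
  also have "\<dots> \<le> dist (g 0) q + dist q p + dist p (g l)" using dist_triangle[of "g 0" "g l" q] dist_triangle[of q "g l" p] by auto
  also have "\<dots> = infdist (g 0) A + dist q p + infdist (g l) A" using projD[OF q] projD[OF p] by (auto simp: dist_commute)
  finally have tri: "l \<le> infdist (g 0) A + dist q p + infdist (g l) A" .
  show ?thesis
  proof (cases "N = 0")
    case True thus ?thesis using N infdist_nonneg[of "g 0" A] K by auto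
  next
    case False thus ?thesis using N tri by auto
  qed
qed

lemma left_near:
  assumes K: "K > 0"
    and iso: "\<forall>s\<in>{0..L}. \<forall>s'\<in>{0..L}. dist (g s) (g s') = \<bar>s - s'\<bar>"
    and t: "t \<in> {0..L}" and s0: "s0 \<in> {0..t}" and r0: "infdist (g s0) A < 3*K"
  shows "\<exists>t1\<in>{0..t}. infdist (g t1) A \<le> 3*K \<and> (\<forall>s\<in>{t1<..t}. 3*K \<le> infdist (g s) A)"
proof -
  define T where "T = {s\<in>{0..t}. infdist (g s) A < 3*K}"
  have ne: "T \<noteq> {}" using s0 r0 T_def by auto
  have bdd: "bdd_above T" unfolding T_def by (intro bdd_aboveI[of _ t]) auto
  define t1 where "t1 = Sup T"
  have t1le: "t1 \<le> t" unfolding t1_def using ne by (intro cSup_least) (auto simp: T_def)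
  have t1ge: "s0 \<le> t1" unfolding t1_def using s0 r0 bdd by (intro cSup_upper) (auto simp: T_def)
  have t1in: "t1 \<in> {0..t}" using t1le t1ge s0 by auto
  have far: "\<forall>s\<in>{t1<..t}. 3*K \<le> infdist (g s) A"
  proof
    fix s assume s: "s \<in> {t1<..t}"
    show "3*K \<le> infdist (g s) A"
    proof (rule ccontr)
      assume "\<not> 3*K \<le> infdist (g s) A"
      hence "s \<in> T" using s t1in T_def by auto
      hence "s \<le> t1" unfolding t1_def using bdd by (intro cSup_upper)
      thus False using s by auto
    qed
  qed
  have near: "infdist (g t1) A \<le> 3*K"
  proof (rule ccontr)
    assume a: "\<not> infdist (g t1) A \<le> 3*K"
    define e where "e = infdist (g t1) A - 3*K"
    have "t1 - e < Sup T" using a e_def t1_def by auto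
    then obtain s where s: "s \<in> T" "t1 - e < s" using less_cSup_iff[OF ne bdd] by auto
    have "s \<le> t1" unfolding t1_def using bdd s by (intro cSup_upper)
    have "dist (g t1) (g s) = t1 - s" using iso s T_def t1in t \<open>s \<le> t1\<close> by auto
    moreover have "infdist (g t1) A \<le> infdist (g s) A + dist (g t1) (g s)" by (rule infdist_triangle)
    ultimately show False using s T_def e_def by auto
  qed
  show ?thesis using t1in near far by blast
qed

lemma seg_proj:
  assumes c: "contracting K A" and K: "K > 0"
    and iso: "\<forall>s\<in>{0..L}. \<forall>s'\<in>{0..L}. dist (g s) (g s') = \<bar>s - s'\<bar>"
    and t: "t \<in> {0..L}" and s0: "s0 \<in> {0..t}" and r0: "infdist (g s0) A < 3*K"
    and pz: "pz \<in> proj A (g t)"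
  shows "\<exists>t1\<in>{0..t}. infdist (g t1) A \<le> 3*K \<and> (\<forall>p1\<in>proj A (g t1). dist p1 pz \<le> 8*K)"
proof -
  obtain t1 where t1: "t1 \<in> {0..t}" "infdist (g t1) A \<le> 3*K" "\<forall>s\<in>{t1<..t}. 3*K \<le> infdist (g s) A"
    using left_near[OF K iso t s0 r0] by blast
  have "\<forall>p1\<in>proj A (g t1). dist p1 pz \<le> 8*K"
  proof
    fix p1 assume p1: "p1 \<in> proj A (g t1)"
    have iso': "\<forall>s\<in>{0..t-t1}. \<forall>s'\<in>{0..t-t1}. dist (g (t1+s)) (g (t1+s')) = \<bar>s - s'\<bar>"
      using iso t1 t by auto
    have far': "\<forall>s\<in>{0<..t-t1}. 3*K \<le> infdist (g (t1+s)) A" using t1 by auto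
    have "dist p1 pz \<le> infdist (g (t1+0)) A + 5*K"
      using bgi[OF c K _ iso' far', of p1 pz] p1 pz t1 by auto
    thus "dist p1 pz \<le> 8*K" using t1 by auto
  qed
  thus ?thesis using t1 by blast
qed

lemma morse:
  assumes c: "contracting K A" and K: "K > 0"
    and iso: "\<forall>s\<in>{0..L}. \<forall>s'\<in>{0..L}. dist (g s) (g s') = \<bar>s - s'\<bar>"
    and r0: "infdist (g 0) A < 3*K" and rL: "infdist (g L) A < 3*K"
    and t: "t \<in> {0..L}"
  shows "infdist (g t) A \<le> 14*K"
proof -
  obtain pz where pz: "pz \<in> proj A (g t)" using proj_ne[OF c] by blast
  obtain t1 where t1: "t1 \<in> {0..t}" "infdist (g t1) A \<le> 3*K" "\<forall>p1\<in>proj A (g t1). dist p1 pz \<le> 8*K"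
    using seg_proj[OF c K iso t _ r0 pz] t by auto
  define h where "h = (\<lambda>s. g (L - s))"
  have isoh: "\<forall>s\<in>{0..L}. \<forall>s'\<in>{0..L}. dist (h s) (h s') = \<bar>s - s'\<bar>"
    using iso unfolding h_def by auto
  have th: "L - t \<in> {0..L}" using t by auto
  have pzh: "pz \<in> proj A (h (L - t))" using pz h_def by simp
  have r0h: "infdist (h 0) A < 3*K" using rL h_def by simp
  obtain t2' where t2: "t2' \<in> {0..L-t}" "infdist (h t2') A \<le> 3*K" "\<forall>p1\<in>proj A (h t2'). dist p1 pz \<le> 8*K"
    using seg_proj[OF c K isoh th _ r0h pzh] th by auto
  define t2 where "t2 = L - t2'"
  have t2': "h t2' = g t2" using h_def t2_def by simp
  obtain p1 where p1: "p1 \<in> proj A (g t1)" using proj_ne[OF c] by blast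
  obtain p2 where p2: "p2 \<in> proj A (g t2)" using proj_ne[OF c] by blast
  have d1: "dist p1 pz \<le> 8*K" using t1 p1 by auto
  have d2: "dist p2 pz \<le> 8*K" using t2 p2 t2' by auto
  have r2: "infdist (g t2) A \<le> 3*K" using t2 t2' by auto
  have "t2 - t1 = dist (g t1) (g t2)" using iso t1 t2 t t2_def by auto
  also have "\<dots> \<le> dist (g t1) p1 + dist p1 pz + dist pz p2 + dist p2 (g t2)"
    using dist_triangle[of "g t1" "g t2" p1] dist_triangle[of p1 "g t2" pz] dist_triangle[of pz "g t2" p2] by auto
  also have "\<dots> \<le> 22*K" using projD[OF p1] projD[OF p2] d1 d2 t1 r2 by (auto simp: dist_commute)
  finally have A: "t2 - t1 \<le> 22*K" .
  have B1: "infdist (g t) A \<le> infdist (g t1) A + dist (g t) (g t1)" by (rule infdist_triangle)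
  have B2: "infdist (g t) A \<le> infdist (g t2) A + dist (g t) (g t2)" by (rule infdist_triangle)
  have "dist (g t) (g t1) = t - t1" using iso t1 t by auto
  moreover have "dist (g t) (g t2) = t2 - t" using iso t2 t t2_def by auto
  ultimately show ?thesis using A B1 B2 t1 r2 by auto
qed

lemma geod:
  assumes "geodesic_space TYPE('a::metric_space)"
  shows "\<exists>g::real\<Rightarrow>'a. g 0 = u \<and> g (dist u v) = v \<and>
     (\<forall>s\<in>{0..dist u v}. \<forall>t\<in>{0..dist u v}. dist (g s) (g t) = \<bar>s - t\<bar>)"
  using assms unfolding geodesic_space_def by blast

lemma axis_up:
  assumes "contracting_axis K x"
  shows "dist (x i) (x j) \<le> K * \<bar>real_of_int (i - j)\<bar> + K"
  using assms unfolding contracting_axis_def by blast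

lemma axis_low:
  assumes "contracting_axis K x" "K > 0"
  shows "\<bar>real_of_int (i - j)\<bar> \<le> K * (dist (x i) (x j) + K)"
proof -
  have "\<bar>real_of_int (i - j)\<bar> / K - K \<le> dist (x i) (x j)" using assms unfolding contracting_axis_def by blast
  hence "\<bar>real_of_int (i - j)\<bar> / K \<le> dist (x i) (x j) + K" by linarith
  thus ?thesis using assms(2) by (simp add: field_simps)
qed

lemma axis_contr: "contracting_axis K x \<Longrightarrow> contracting K (range x)"
  unfolding contracting_axis_def by blast

lemma part1:
  fixes K :: real and x y :: "int \<Rightarrow> 'a::metric_space"
  assumes geo: "geodesic_space TYPE('a)"
    and K1: "K > 1"
    and ax: "contracting_axis K x" and ay: "contracting_axis K y"
    and ind: "independent x y"
  shows "\<exists>C. \<forall>m. \<forall>p\<in>proj (range x) (y m). dist p (x 0) \<le> C"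
proof -
  have K: "K > 0" using K1 by auto
  define A where "A = range x"
  define E where "E = range y"
  have cA: "contracting K A" using axis_contr[OF ax] A_def by simp
  have cE: "contracting K E" using axis_contr[OF ay] E_def by simp
  obtain B :: int where B: "\<forall>n m. dist (x n) (y m) < 17*K + 1 \<longrightarrow> \<bar>n\<bar> \<le> B \<and> \<bar>m\<bar> \<le> B"
    using ind K unfolding independent_def by (metis add_pos_pos mult_pos_pos zero_less_numeral zero_less_one)
  define C where "C = 3 * dist (y 0) (x 0) + 9*K + K * \<bar>real_of_int B\<bar>"
  have "\<forall>m. \<forall>p\<in>proj A (y m). dist p (x 0) \<le> C"
  proof (intro allI ballI)
    fix m p assume p: "p \<in> proj A (y m)"
    define L where "L = dist (y 0) (y m)"
    obtain g where g: "g 0 = y 0" "g L = y m"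
      and iso: "\<forall>s\<in>{0..L}. \<forall>t\<in>{0..L}. dist (g s) (g t) = \<bar>s - t\<bar>"
      using geod[OF geo] L_def by blast
    have L0: "0 \<le> L" using L_def by simp
    have mE: "\<forall>t\<in>{0..L}. infdist (g t) E \<le> 14*K"
    proof
      fix t assume t: "t \<in> {0..L}"
      show "infdist (g t) E \<le> 14*K"
        by (rule morse[OF cE K iso _ _ t]) (auto simp: g E_def K)
    qed
    show "dist p (x 0) \<le> C"
    proof (cases "\<exists>s\<in>{0..L}. infdist (g s) A < 3*K")
      case True
      then obtain s0 where s0: "s0 \<in> {0..L}" "infdist (g s0) A < 3*K" by blast
      have pL: "p \<in> proj A (g L)" using p g by simp
      obtain t1 where t1: "t1 \<in> {0..L}" "infdist (g t1) A \<le> 3*K"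
          "\<forall>p1\<in>proj A (g t1). dist p1 p \<le> 8*K"
        using seg_proj[OF cA K iso _ s0 pL] L0 by auto
      obtain p1 where p1: "p1 \<in> proj A (g t1)" using proj_ne[OF cA] by blast
      obtain e1 where e1: "e1 \<in> proj E (g t1)" using proj_ne[OF cE] by blast
      obtain n where n: "p1 = x n" using projD[OF p1] A_def by auto
      obtain m' where m': "e1 = y m'" using projD[OF e1] E_def by auto
      have "dist (x n) (y m') \<le> dist (x n) (g t1) + dist (g t1) (y m')" by (rule dist_triangle)
      also have "\<dots> \<le> 3*K + 14*K"
      proof -
        have "infdist (g t1) E \<le> 14*K" using mE t1 by auto
        thus ?thesis using projD[OF p1] projD[OF e1] n m' t1 by (auto simp: dist_commute)
      qed
      finally have "dist (x n) (y m') < 17*K + 1" by simp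
      hence nB: "\<bar>n\<bar> \<le> B" using B by blast
      have "dist (x n) (x 0) \<le> K * \<bar>real_of_int (n - 0)\<bar> + K" by (rule axis_up[OF ax])
      also have "\<dots> \<le> K * \<bar>real_of_int B\<bar> + K" using nB K by (auto intro!: mult_left_mono)
      finally have "dist (x n) (x 0) \<le> K * \<bar>real_of_int B\<bar> + K" .
      moreover have "dist p1 p \<le> 8*K" using t1 p1 by auto
      ultimately have "dist p (x 0) \<le> 8*K + K * \<bar>real_of_int B\<bar> + K"
        using dist_triangle[of p "x 0" p1] n by (auto simp: dist_commute)
      thus ?thesis unfolding C_def using K zero_le_dist[of "y 0" "x 0"] by linarith
    next
      case False
      hence far: "\<forall>s\<in>{0<..L}. 3*K \<le> infdist (g s) A" by (auto simp: not_less)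
      obtain q where q: "q \<in> proj A (g 0)" using proj_ne[OF cA] by blast
      have "dist q p \<le> infdist (g 0) A + 5*K" using bgi[OF cA K L0 iso far q] p g by auto
      moreover have "infdist (g 0) A \<le> dist (y 0) (x 0)" using g A_def by (auto intro: infdist_le)
      moreover have "dist q (x 0) \<le> dist q (y 0) + dist (y 0) (x 0)" by (rule dist_triangle)
      moreover have "dist q (y 0) = infdist (g 0) A" using projD[OF q] g by (simp add: dist_commute)
      ultimately have "dist p (x 0) \<le> 3 * dist (y 0) (x 0) + 5*K"
        using dist_triangle[of p "x 0" q] by (auto simp: dist_commute)
      moreover have "0 \<le> K * \<bar>real_of_int B\<bar>" using K by simp
      ultimately show ?thesis unfolding C_def using K by linarith
    qed
  qed
  thus ?thesis unfolding A_def by blast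
qed

lemma part2:
  fixes K :: real and x :: "int \<Rightarrow> 'a::metric_space"
  assumes geo: "geodesic_space TYPE('a)"
    and K1: "K > 1"
    and ax: "contracting_axis K x"
  shows "\<exists>C. \<forall>j\<le>0. \<forall>p\<in>proj (x ` {0..}) (x j). dist p (x 0) \<le> C"
proof -
  have K: "K > 0" using K1 by auto
  define A where "A = range x"
  have cA: "contracting K A" using axis_contr[OF ax] A_def by simp
  define Cw where "Cw = 14*K + K * (K * (29*K + 1)) + K"
  have "\<forall>j\<le>0. \<forall>p\<in>proj (x ` {0..}) (x j). dist p (x 0) \<le> 2*Cw"
  proof (intro allI impI ballI)
    fix j :: int and p assume j: "j \<le> 0" and p: "p \<in> proj (x ` {0..}) (x j)"
    obtain i where i: "i \<ge> 0" "p = x i" using projD[OF p] by auto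
    have Lle: "dist (x j) (x i) \<le> dist (x j) (x 0)"
      using projD[OF p] i by (metis atLeast_iff image_eqI infdist_le order_refl)
    define L where "L = dist (x j) (x i)"
    obtain g where g: "g 0 = x j" "g L = x i"
      and iso: "\<forall>s\<in>{0..L}. \<forall>t\<in>{0..L}. dist (g s) (g t) = \<bar>s - t\<bar>"
      using geod[OF geo] L_def by blast
    have L0: "0 \<le> L" using L_def by simp
    have mA: "\<forall>t\<in>{0..L}. infdist (g t) A \<le> 14*K"
    proof
      fix t assume t: "t \<in> {0..L}"
      show "infdist (g t) A \<le> 14*K"
        by (rule morse[OF cA K iso _ _ t]) (auto simp: g A_def K)
    qed
    have selfproj: "\<And>n. x n \<in> proj A (x n)" unfolding proj_def A_def by auto
    define T where "T = {t\<in>{0..L}. \<exists>n\<le>0. x n \<in> proj A (g t)}"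
    have "0 \<in> T" using selfproj[of j] j g L0 unfolding T_def by auto
    hence ne: "T \<noteq> {}" by blast
    have bdd: "bdd_above T" unfolding T_def by (intro bdd_aboveI[of _ L]) auto
    define s where "s = Sup T"
    have sL: "s \<le> L" unfolding s_def using ne by (intro cSup_least) (auto simp: T_def)
    have "s - 1/2 < s" by simp
    then obtain u1 where u1: "u1 \<in> T" "s - 1/2 < u1" using less_cSup_iff[OF ne bdd] s_def by auto
    have u1s: "u1 \<le> s" unfolding s_def using bdd u1 by (intro cSup_upper)
    obtain n1 where n1: "n1 \<le> 0" "x n1 \<in> proj A (g u1)" using u1 T_def by auto
    have u1L: "u1 \<in> {0..L}" using u1 T_def by auto
    have s0: "0 \<le> s" using u1s u1L by auto
    define u2 where "u2 = min L (s + 1/2)"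
    have u2L: "u2 \<in> {0..L}" using u2_def s0 sL L0 by auto
    obtain n2 where n2: "0 \<le> n2" "x n2 \<in> proj A (g u2)"
    proof (cases "s < L")
      case True
      obtain q where q: "q \<in> proj A (g u2)" using proj_ne[OF cA] by blast
      obtain n where n: "q = x n" using projD[OF q] A_def by auto
      have "u2 \<notin> T"
      proof
        assume "u2 \<in> T"
        hence "u2 \<le> s" unfolding s_def using bdd by (intro cSup_upper)
        thus False using True u2_def by auto
      qed
      hence "\<not> n \<le> 0" using q n u2L T_def by auto
      thus ?thesis using that[of n] q n by auto
    next
      case False
      hence "u2 = L" using sL u2_def by auto
      thus ?thesis using that[of i] i g selfproj[of i] by auto
    qed
    have du: "dist (g u1) (g u2) \<le> 1" using iso u1L u2L u1 u1s u2_def sL by auto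
    have "dist (x n1) (x n2) \<le> dist (x n1) (g u1) + dist (g u1) (g u2) + dist (g u2) (x n2)"
      using dist_triangle[of "x n1" "x n2" "g u1"] dist_triangle[of "g u1" "x n2" "g u2"] by auto
    also have "\<dots> \<le> 14*K + 1 + 14*K"
    proof -
      have "infdist (g u1) A \<le> 14*K" "infdist (g u2) A \<le> 14*K" using mA u1L u2L by auto
      thus ?thesis using projD[OF n1(2)] projD[OF n2(2)] du by (auto simp: dist_commute)
    qed
    finally have d12: "dist (x n1) (x n2) \<le> 28*K + 1" by simp
    have "\<bar>real_of_int (n2 - n1)\<bar> \<le> K * (dist (x n2) (x n1) + K)" by (rule axis_low[OF ax K])
    also have "\<dots> \<le> K * (29*K + 1)" using d12 K by (auto simp: dist_commute intro!: mult_left_mono)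
    finally have "real_of_int n2 \<le> K * (29*K + 1)" using n1 n2 by linarith
    hence "\<bar>real_of_int (n2 - 0)\<bar> \<le> K * (29*K + 1)" using n2 by simp
    hence "K * \<bar>real_of_int (n2 - 0)\<bar> \<le> K * (K * (29*K + 1))" using K by (intro mult_left_mono) auto
    hence dn2: "dist (x n2) (x 0) \<le> K * (K * (29*K + 1)) + K" using axis_up[OF ax, of n2 0] by linarith
    define w where "w = g u2"
    have dw: "dist w (x 0) \<le> Cw"
    proof -
      have "dist w (x n2) \<le> 14*K" using projD[OF n2(2)] mA u2L w_def by auto
      thus ?thesis using dn2 dist_triangle[of w "x 0" "x n2"] Cw_def by auto
    qed
    have "L = dist (g 0) (g u2) + dist (g u2) (g L)" using iso u2L L0 by auto
    hence "L = dist (x j) w + dist w (x i)" using g w_def by simp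
    moreover have "dist (x j) (x 0) \<le> dist (x j) w + dist w (x 0)" by (rule dist_triangle)
    moreover have "dist (x 0) (x i) \<le> dist (x 0) w + dist w (x i)" by (rule dist_triangle)
    ultimately have "dist (x 0) (x i) \<le> 2*Cw" using Lle L_def dw by (auto simp: dist_commute)
    thus "dist p (x 0) \<le> 2*Cw" using i by (simp add: dist_commute)
  qed
  thus ?thesis by blast
qed

lemma diam_insert_bound:
  assumes "\<forall>p\<in>S. dist p z \<le> C" "0 \<le> C"
  shows "diam (insert z S) < ereal (2*C + 1)"
proof -
  have "diam (insert z S) \<le> ereal (2*C)"
  proof (rule diam_bound)
    fix a b assume a: "a \<in> insert z S" and b: "b \<in> insert z S"
    have da: "dist a z \<le> C" using a assms by auto
    have db: "dist b z \<le> C" using b assms by auto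
    show "dist a b \<le> 2*C" using dist_triangle[of a b z] da db by (auto simp: dist_commute)
  qed
  also have "\<dots> < ereal (2*C + 1)" by simp
  finally show ?thesis .
qed

theorem lemma3p9:
  fixes K :: real and x y :: "int \<Rightarrow> 'a::metric_space"
  assumes "geodesic_space TYPE('a)"
    and "K > 1"
    and "contracting_axis K x" and "contracting_axis K y"
    and "independent x y"
  shows "\<exists>K'>0. diam (insert (x 0) (proj_set (range x) (range y))) < ereal K' \<and>
                diam (insert (x 0) (proj_set (x ` {0..}) (x ` {..0}))) < ereal K'"
proof -
  obtain C1 where C1: "\<forall>m. \<forall>p\<in>proj (range x) (y m). dist p (x 0) \<le> C1"
    using part1[OF assms] by blast
  obtain C2 where C2: "\<forall>j\<le>0. \<forall>p\<in>proj (x ` {0..}) (x j). dist p (x 0) \<le> C2"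
    using part2[OF assms(1,2,3)] by blast
  define C where "C = max (max C1 C2) 0"
  have C0: "0 \<le> C" unfolding C_def by simp
  have 1: "\<forall>p\<in>proj_set (range x) (range y). dist p (x 0) \<le> C"
    using C1 unfolding proj_set_def C_def by fastforce
  have 2: "\<forall>p\<in>proj_set (x ` {0..}) (x ` {..0}). dist p (x 0) \<le> C"
    using C2 unfolding proj_set_def C_def by fastforce
  show ?thesis
    using diam_insert_bound[OF 1 C0] diam_insert_bound[OF 2 C0] C0
    by (intro exI[of _ "2*C+1"]) auto
qed

end
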